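(* There exist uncountably many W-subshifts $X \subset \{0,1\}^{\mathbb Z}$ which are neither sofic nor strongly irreducible.
   Context: A subshift of $A^{\mathbb Z}$ is a closed shift-invariant subset, with shift $(gx)(h)=x(h-g)$. $X$ is of finite type if there are finite $\Omega\subset\mathbb Z$ and $\mathcal P\subset A^\Omega$ with $X=\{x:(gx)|_\Omega\in\mathcal P\ \forall g\}$; $X$ is sofic if it is the image of a subshift of finite type $Y\subset B^{\mathbb Z}$ ($B$ finite) under a surjective continuous shift-equivariant map. $X$ is strongly irreducible if there is finite $\Delta\subset\mathbb Z$ such that for all finite $\Omega_1,\Omega_2$ with $(\Omega_1-\Delta)\cap\Omega_2=\varnothing$ and all $x_1,x_2\in X$ there is $x\in X$ agreeing with $x_1$ on $\Omega_1$ and with $x_2$ on $\Omega_2$. $L(X)$ is the set of finite words (including the empty word) appearing as $x(i)\cdots x(j)$ in some $x\in X$. $X$ is a W-subshift if there is an integer $n_0\ge0$ such that for all $u,v\in L(X)$ there is $c\in L(X)$ with $|c|\le n_0$ and $ucv\in L(X)$. *)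

theory Defs
  imports Main "HOL-Library.Countable_Set" "HOL-Library.FuncSet"
begin

definition shift :: "int \<Rightarrow> (int \<Rightarrow> 'a) \<Rightarrow> (int \<Rightarrow> 'a)" where
  "shift g x = (\<lambda>h. x (h - g))"

text \<open>Closedness in the product topology of the (discrete) finite alphabet:
  a configuration all of whose central windows are approximated by elements
  of X lies in X.\<close>

definition closed_conf :: "(int \<Rightarrow> 'a) set \<Rightarrow> bool" where
  "closed_conf X \<longleftrightarrow>
     (\<forall>x. (\<forall>n::nat. \<exists>y\<in>X. \<forall>i. \<bar>i\<bar> \<le> int n \<longrightarrow> y i = x i) \<longrightarrow> x \<in> X)"

definition subshift :: "(int \<Rightarrow> 'a) set \<Rightarrow> bool" where
  "subshift X \<longleftrightarrow> closed_conf X \<and> (\<forall>g. \<forall>x\<in>X. shift g x \<in> X)"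

definition SFT_over :: "nat set \<Rightarrow> (int \<Rightarrow> nat) set \<Rightarrow> bool" where
  "SFT_over B Y \<longleftrightarrow> finite B \<and>
     (\<exists>\<Omega> P. finite \<Omega> \<and> P \<subseteq> (\<Omega> \<rightarrow>\<^sub>E B) \<and>
        Y = {y. range y \<subseteq> B \<and> (\<forall>g. restrict (shift g y) \<Omega> \<in> P)})"

definition continuous_conf_on :: "(int \<Rightarrow> 'b) set \<Rightarrow> ((int \<Rightarrow> 'b) \<Rightarrow> (int \<Rightarrow> 'a)) \<Rightarrow> bool" where
  "continuous_conf_on Y \<phi> \<longleftrightarrow>
     (\<forall>x\<in>Y. \<forall>n::nat. \<exists>m::nat. \<forall>y\<in>Y.
        (\<forall>i. \<bar>i\<bar> \<le> int m \<longrightarrow> y i = x i) \<longrightarrow> (\<forall>i. \<bar>i\<bar> \<le> int n \<longrightarrow> \<phi> y i = \<phi> x i))"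

definition equivariant_on :: "(int \<Rightarrow> 'b) set \<Rightarrow> ((int \<Rightarrow> 'b) \<Rightarrow> (int \<Rightarrow> 'a)) \<Rightarrow> bool" where
  "equivariant_on Y \<phi> \<longleftrightarrow> (\<forall>g. \<forall>y\<in>Y. \<phi> (shift g y) = shift g (\<phi> y))"

definition sofic :: "(int \<Rightarrow> 'a) set \<Rightarrow> bool" where
  "sofic X \<longleftrightarrow> (\<exists>B Y \<phi>. SFT_over B Y \<and> continuous_conf_on Y \<phi> \<and> equivariant_on Y \<phi>
                       \<and> \<phi> ` Y = X)"

definition strongly_irreducible :: "(int \<Rightarrow> 'a) set \<Rightarrow> bool" where
  "strongly_irreducible X \<longleftrightarrow>
     (\<exists>\<Delta>::int set. finite \<Delta> \<and>
       (\<forall>\<Omega>1 \<Omega>2. finite \<Omega>1 \<and> finite \<Omega>2 \<and> {a - d |a d. a \<in> \<Omega>1 \<and> d \<in> \<Delta>} \<inter> \<Omega>2 = {} \<longrightarrow>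
          (\<forall>x1\<in>X. \<forall>x2\<in>X. \<exists>x\<in>X. (\<forall>i\<in>\<Omega>1. x i = x1 i) \<and> (\<forall>i\<in>\<Omega>2. x i = x2 i))))"

definition lang :: "(int \<Rightarrow> 'a) set \<Rightarrow> 'a list set" where
  "lang X = {map (\<lambda>k. x (i + int k)) [0..<n] | x i n. x \<in> X}"

definition W_subshift :: "(int \<Rightarrow> 'a) set \<Rightarrow> bool" where
  "W_subshift X \<longleftrightarrow> subshift X \<and>
     (\<exists>n0::nat. \<forall>u\<in>lang X. \<forall>v\<in>lang X. \<exists>c\<in>lang X. length c \<le> n0 \<and> u @ c @ v \<in> lang X)"

end

theory Submission
  imports Defs
begin


lemma uncountable_natset: "uncountable (UNIV :: nat set set)"
proof
  assume "countable (UNIV :: nat set set)"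
  then obtain f :: "nat \<Rightarrow> nat set" where "range f = UNIV"
    by (metis uncountable_def UNIV_not_empty)
  then obtain n where "f n = {m. m \<notin> f m}" by (metis UNIV_I imageE)
  then show False by blast
qed

definition inD :: "nat set \<Rightarrow> int \<Rightarrow> bool" where
  "inD T d \<longleftrightarrow> d mod 4 = 2 \<or> (d mod 4 = 0 \<and> d > 0 \<and> nat (d div 4 - 1) \<in> T)"

definition gapX :: "nat set \<Rightarrow> (int \<Rightarrow> bool) set" where
  "gapX T = {x. \<forall>i j. i < j \<and> x i \<and> x j \<and> (\<forall>k. i < k \<and> k < j \<longrightarrow> \<not> x k) \<longrightarrow> inD T (j - i)}"

lemma gapX_even:
  assumes "x \<in> gapX T"
  shows "i < j \<Longrightarrow> x i \<Longrightarrow> x j \<Longrightarrow> even (j - i)"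
proof (induction "nat (j - i)" arbitrary: i j rule: less_induct)
  case less
  show ?case
  proof (cases "\<exists>k. i < k \<and> k < j \<and> x k")
    case True
    then obtain k where k: "i < k" "k < j" "x k" by blast
    have "even (k - i)" using less(1)[of k i] k less by auto
    moreover have "even (j - k)" using less(1)[of j k] k less by auto
    ultimately have "even ((k - i) + (j - k))" by auto
    then show ?thesis by simp
  next
    case False
    then have "inD T (j - i)" using assms less unfolding gapX_def by blast
    then show ?thesis unfolding inD_def
      by (metis dvd_mod_iff even_numeral even_zero dvd_refl)
  qed
qed

lemma gapX_subshift: "subshift (gapX T)"
  unfolding subshift_def
proof
  show "closed_conf (gapX T)"
    unfolding closed_conf_def
  proof (intro allI impI)
    fix x :: "int \<Rightarrow> bool"
    assume H: "\<forall>n::nat. \<exists>y\<in>gapX T. \<forall>i. \<bar>i\<bar> \<le> int n \<longrightarrow> y i = x i"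
    show "x \<in> gapX T" unfolding gapX_def
    proof (intro CollectI allI impI)
      fix i j assume A: "i < j \<and> x i \<and> x j \<and> (\<forall>k. i < k \<and> k < j \<longrightarrow> \<not> x k)"
      obtain y where y: "y \<in> gapX T" "\<forall>k. \<bar>k\<bar> \<le> int (nat (\<bar>i\<bar> + \<bar>j\<bar>)) \<longrightarrow> y k = x k"
        using H by blast
      have "\<forall>k. i \<le> k \<and> k \<le> j \<longrightarrow> y k = x k" using y(2) by auto
      then have "i < j \<and> y i \<and> y j \<and> (\<forall>k. i < k \<and> k < j \<longrightarrow> \<not> y k)" using A by auto
      then show "inD T (j - i)" using y(1) unfolding gapX_def by blast
    qed
  qed
  show "\<forall>g. \<forall>x\<in>gapX T. shift g x \<in> gapX T"
  proof (intro allI ballI)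
    fix g x assume x: "x \<in> gapX T"
    show "shift g x \<in> gapX T" unfolding gapX_def shift_def
    proof (intro CollectI allI impI)
      fix i j assume A: "i < j \<and> x (i - g) \<and> x (j - g) \<and> (\<forall>k. i < k \<and> k < j \<longrightarrow> \<not> x (k - g))"
      have "\<forall>k. i - g < k \<and> k < j - g \<longrightarrow> \<not> x k"
      proof (intro allI impI)
        fix k assume "i - g < k \<and> k < j - g"
        then show "\<not> x k" using A[THEN conjunct2, THEN conjunct2, THEN conjunct2, rule_format, of "k + g"] by auto
      qed
      moreover have "i - g < j - g" using A by simp
      ultimately have "inD T ((j - g) - (i - g))" using x A unfolding gapX_def by blast
      then show "inD T (j - i)" by simp
    qed
  qed
qed

lemma gapX_not_SI: "\<not> strongly_irreducible (gapX T)"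
  unfolding strongly_irreducible_def
proof
  assume "\<exists>\<Delta>::int set. finite \<Delta> \<and> (\<forall>\<Omega>1 \<Omega>2. finite \<Omega>1 \<and> finite \<Omega>2 \<and> {a - d |a d. a \<in> \<Omega>1 \<and> d \<in> \<Delta>} \<inter> \<Omega>2 = {} \<longrightarrow>
          (\<forall>x1\<in>gapX T. \<forall>x2\<in>gapX T. \<exists>x\<in>gapX T. (\<forall>i\<in>\<Omega>1. x i = x1 i) \<and> (\<forall>i\<in>\<Omega>2. x i = x2 i)))"
  then obtain \<Delta> :: "int set" where D: "finite \<Delta> \<and> (\<forall>\<Omega>1 \<Omega>2. finite \<Omega>1 \<and> finite \<Omega>2 \<and> {a - d |a d. a \<in> \<Omega>1 \<and> d \<in> \<Delta>} \<inter> \<Omega>2 = {} \<longrightarrow>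
          (\<forall>x1\<in>gapX T. \<forall>x2\<in>gapX T. \<exists>x\<in>gapX T. (\<forall>i\<in>\<Omega>1. x i = x1 i) \<and> (\<forall>i\<in>\<Omega>2. x i = x2 i)))" ..
  note fin = conjunct1[OF D] and H = conjunct2[OF D]
  define N where "N = 2 * (\<Sum>d\<in>\<Delta>. \<bar>d\<bar>) + 1"
  have Nd: "\<bar>d\<bar> < N" if "d \<in> \<Delta>" for d
  proof -
    have "\<bar>d\<bar> \<le> (\<Sum>d\<in>\<Delta>. \<bar>d\<bar>)" using fin that by (intro member_le_sum) auto
    moreover have "0 \<le> (\<Sum>d\<in>\<Delta>. \<bar>d\<bar>)" by (intro sum_nonneg) auto
    ultimately show ?thesis unfolding N_def by linarith
  qed
  have disj: "{a - d |a d. a \<in> {0::int} \<and> d \<in> \<Delta>} \<inter> {N} = {}"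
  proof (rule ccontr)
    assume "{a - d |a d. a \<in> {0::int} \<and> d \<in> \<Delta>} \<inter> {N} \<noteq> {}"
    then obtain d where "d \<in> \<Delta>" "0 - d = N" by auto
    with Nd[of d] show False by auto
  qed
  have x1: "(\<lambda>i. i = 0) \<in> gapX T" unfolding gapX_def by auto
  have x2: "(\<lambda>i. i = N) \<in> gapX T" unfolding gapX_def by auto
  have G: "\<forall>x1\<in>gapX T. \<forall>x2\<in>gapX T. \<exists>x\<in>gapX T. (\<forall>i\<in>{0}. x i = x1 i) \<and> (\<forall>i\<in>{N}. x i = x2 i)"
    using spec[OF spec[OF H, of "{0}"], of "{N}"] disj by simp
  obtain x where x: "x \<in> gapX T" "\<forall>i\<in>{0}. x i = (i = 0)" "\<forall>i\<in>{N}. x i = (i = N)"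
    using bspec[OF bspec[OF G x1] x2] by blast
  have S0: "0 \<le> (\<Sum>d\<in>\<Delta>. \<bar>d\<bar>)" by (intro sum_nonneg) auto
  have N0: "0 < N" unfolding N_def using S0 by linarith
  have "even (N - 0)" using gapX_even[OF x(1) N0] x(2,3) by simp
  then show False unfolding N_def by simp
qed

lemma gapX_inj: "inj gapX"
proof (rule injI)
  have key: "k \<in> T'" if "gapX T = gapX T'" "k \<in> T" for T T' k
  proof -
    define x where "x = (\<lambda>p::int. p = 0 \<or> p = 4 * int k + 4)"
    have "x \<in> gapX T" unfolding gapX_def x_def inD_def using that(2) by auto
    then have "x \<in> gapX T'" using that(1) by simp
    then have "inD T' (4 * int k + 4 - 0)" unfolding gapX_def x_def
      by (elim CollectE allE[of _ 0] allE[of _ "4 * int k + 4"]) auto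
    then show ?thesis unfolding inD_def by simp
  qed
  fix T T' assume "gapX T = gapX T'"
  then show "T = T'" using key by (metis subsetI subset_antisym)
qed



lemma lang_intro: "x \<in> X \<Longrightarrow> map (\<lambda>k. x (i + int k)) [0..<n] \<in> lang X"
  unfolding lang_def by blast

lemma lang_elim:
  assumes "subshift X" "w \<in> lang X"
  shows "\<exists>x\<in>X. \<forall>k<length w. w ! k = x (int k)"
proof -
  obtain x i n where w: "w = map (\<lambda>k. x (i + int k)) [0..<n]" "x \<in> X"
    using assms(2) unfolding lang_def by blast
  have "shift (-i) x \<in> X" using assms(1) w(2) unfolding subshift_def by blast
  moreover have "\<forall>k<length w. w ! k = shift (-i) x (int k)"
    using w(1) by (auto simp: shift_def add.commute)
  ultimately show ?thesis by blast
qed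

lemma gapX_W: "W_subshift (gapX T)"
  unfolding W_subshift_def
proof (intro conjI gapX_subshift exI[of _ 7] ballI)
  fix u v assume u: "u \<in> lang (gapX T)" and v: "v \<in> lang (gapX T)"
  obtain xu where xu: "xu \<in> gapX T" "\<forall>k<length u. u ! k = xu (int k)"
    using lang_elim[OF gapX_subshift u] by blast
  obtain xv where xv: "xv \<in> gapX T" "\<forall>k<length v. v ! k = xv (int k)"
    using lang_elim[OF gapX_subshift v] by blast
  define nu where "nu = int (length u)"
  define nv where "nv = int (length v)"
  define Pu where "Pu = {p. 0 \<le> p \<and> p < nu \<and> xu p}"
  define Pv where "Pv = {p. 0 \<le> p \<and> p < nv \<and> xv p}"
  have finPu: "finite Pu" unfolding Pu_def by (rule finite_subset[of _ "{0..<nu}"]) auto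
  have finPv: "finite Pv" unfolding Pv_def by (rule finite_subset[of _ "{0..<nv}"]) auto
  define s where "s = (if Pu \<noteq> {} then (2 - (nu - Max Pu)) mod 4 else 0)"
  define t where "t = (if Pv \<noteq> {} then (1 - Min Pv) mod 4 else 0)"
  have s: "0 \<le> s" "s \<le> 3" unfolding s_def by auto
  have t: "0 \<le> t" "t \<le> 3" unfolding t_def by auto
  define M where "M = nu + s"
  define V where "V = M + 1 + t"
  define z where "z = (\<lambda>p. if 0 \<le> p \<and> p < nu then xu p else if p = M then True
                else if V \<le> p \<and> p < V + nv then xv (p - V) else False)"
  have zU: "0 \<le> p \<Longrightarrow> p < nu \<Longrightarrow> z p = xu p" for p unfolding z_def by auto
  have zM: "z M" unfolding z_def M_def using s by auto
  have zV: "V \<le> p \<Longrightarrow> p < V + nv \<Longrightarrow> z p = xv (p - V)" for p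
    unfolding z_def V_def M_def using s t by auto
  have zcases: "z p \<Longrightarrow> (0 \<le> p \<and> p < nu \<and> xu p) \<or> p = M \<or> (V \<le> p \<and> p < V + nv \<and> xv (p - V))" for p
    unfolding z_def by (auto split: if_splits)
  have nu0: "0 \<le> nu" "0 \<le> nv" unfolding nu_def nv_def by auto
  have zX: "z \<in> gapX T" unfolding gapX_def
  proof (intro CollectI allI impI)
    fix i j assume A: "i < j \<and> z i \<and> z j \<and> (\<forall>k. i < k \<and> k < j \<longrightarrow> \<not> z k)"
    then have ij: "i < j" "z i" "z j" and btw: "\<And>k. i < k \<Longrightarrow> k < j \<Longrightarrow> \<not> z k" by auto
    have ord: "nu \<le> M" "M < V" unfolding M_def V_def using s t by auto
    consider (UU) "0 \<le> i \<and> i < nu \<and> xu i" "0 \<le> j \<and> j < nu \<and> xu j"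
      | (UM) "0 \<le> i \<and> i < nu \<and> xu i" "j = M"
      | (UV) "0 \<le> i \<and> i < nu \<and> xu i" "V \<le> j \<and> j < V + nv \<and> xv (j - V)"
      | (MV) "i = M" "V \<le> j \<and> j < V + nv \<and> xv (j - V)"
      | (VV) "V \<le> i \<and> i < V + nv \<and> xv (i - V)" "V \<le> j \<and> j < V + nv \<and> xv (j - V)"
      using zcases[OF ij(2)] zcases[OF ij(3)] ij(1) ord
      by (elim disjE conjE) (linarith | blast)+
    then show "inD T (j - i)"
    proof cases
      case UU
      have "\<forall>k. i < k \<and> k < j \<longrightarrow> \<not> xu k" using btw zU UU by auto
      then show ?thesis using xu(1) UU ij(1) unfolding gapX_def by blast
    next
      case UM
      have iP: "i \<in> Pu" using UM unfolding Pu_def by auto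
      then have ne: "Pu \<noteq> {}" by auto
      have le: "i \<le> Max Pu" using iP finPu by auto
      have mP: "Max Pu \<in> Pu" using finPu ne by auto
      have "\<not> i < Max Pu"
      proof
        assume "i < Max Pu"
        moreover have "Max Pu < j" using mP ord UM unfolding Pu_def by auto
        moreover have "z (Max Pu)" using mP zU unfolding Pu_def by auto
        ultimately show False using btw by blast
      qed
      then have "i = Max Pu" using le by auto
      then have "j - i = nu + (2 - (nu - Max Pu)) mod 4 - Max Pu"
        using UM ne unfolding M_def s_def by auto
      then have "(j - i) mod 4 = 2" by presburger
      then show ?thesis unfolding inD_def by auto
    next
      case UV
      have "i < M" "M < j" using UV ord by auto
      then show ?thesis using btw zM by blast
    next
      case MV
      have jP: "j - V \<in> Pv" using MV unfolding Pv_def by auto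
      then have ne: "Pv \<noteq> {}" by auto
      have le: "Min Pv \<le> j - V" using jP finPv by auto
      have mP: "Min Pv \<in> Pv" using finPv ne by auto
      have "\<not> Min Pv < j - V"
      proof
        assume "Min Pv < j - V"
        moreover have "i < V + Min Pv" using mP ord MV unfolding Pv_def by auto
        moreover have "z (V + Min Pv)" using mP zV unfolding Pv_def by auto
        ultimately show False using btw by (metis add.commute less_diff_eq)
      qed
      then have "j - V = Min Pv" using le by auto
      then have "j - i = 1 + (1 - Min Pv) mod 4 + Min Pv"
        using MV ne unfolding V_def t_def by auto
      then have "(j - i) mod 4 = 2" by presburger
      then show ?thesis unfolding inD_def by auto
    next
      case VV
      have "\<forall>k. i - V < k \<and> k < j - V \<longrightarrow> \<not> xv k"
      proof (intro allI impI)
        fix k assume k: "i - V < k \<and> k < j - V"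
        then have "\<not> z (k + V)" using btw by auto
        moreover have "z (k + V) = xv k" using zV[of "k + V"] k VV by auto
        ultimately show "\<not> xv k" by simp
      qed
      moreover have "i - V < j - V" using ij by simp
      ultimately have "inD T ((j - V) - (i - V))" using xv(1) VV unfolding gapX_def by blast
      then show ?thesis by simp
    qed
  qed
  define L where "L = nat (1 + s + t)"
  define c where "c = map (\<lambda>k. z (nu + int k)) [0..<L]"
  show "\<exists>c\<in>lang (gapX T). length c \<le> 7 \<and> u @ c @ v \<in> lang (gapX T)"
  proof (intro bexI[of _ c] conjI)
    show "c \<in> lang (gapX T)" unfolding c_def by (rule lang_intro[OF zX])
    show "length c \<le> 7" unfolding c_def L_def using s t by auto
    have VL: "V = nu + int L" unfolding V_def M_def L_def using s t by auto
    have eq: "u @ c @ v = map (\<lambda>k. z (0 + int k)) [0..<length u + L + length v]"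
    proof (rule nth_equalityI)
      show "length (u @ c @ v) = length (map (\<lambda>k. z (0 + int k)) [0..<length u + L + length v])"
        unfolding c_def by simp
      fix k assume k: "k < length (u @ c @ v)"
      then have k': "k < length u + L + length v" unfolding c_def by simp
      consider "k < length u" | "length u \<le> k" "k < length u + L" | "length u + L \<le> k"
        by linarith
      then show "(u @ c @ v) ! k = map (\<lambda>k. z (0 + int k)) [0..<length u + L + length v] ! k"
      proof cases
        case 1
        then show ?thesis using xu(2) zU[of "int k"] k' unfolding nu_def by (auto simp: nth_append)
      next
        case 2
        then show ?thesis using k' unfolding c_def nu_def by (auto simp: nth_append)
      next
        case 3
        have "z (int k) = xv (int k - V)" using zV[of "int k"] 3 k' VL unfolding nu_def nv_def by auto
        moreover have "int k - V = int (k - length u - L)" using 3 VL unfolding nu_def by auto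
        ultimately show ?thesis using 3 k' xv(2) unfolding c_def
          by (auto simp: nth_append)
      qed
    qed
    show "u @ c @ v \<in> lang (gapX T)" unfolding eq by (rule lang_intro[OF zX])
  qed
qed



definition SFTset :: "nat set \<Rightarrow> int set \<Rightarrow> (int \<Rightarrow> nat) set \<Rightarrow> (int \<Rightarrow> nat) set" where
  "SFTset B \<Omega> P = {y. range y \<subseteq> B \<and> (\<forall>g. restrict (shift g y) \<Omega> \<in> P)}"

lemma shift_shift: "shift g (shift h y) = shift (g + h) y"
  unfolding shift_def by (simp add: algebra_simps)

lemma SFT_shift: "y \<in> SFTset B \<Omega> P \<Longrightarrow> shift h y \<in> SFTset B \<Omega> P"
  unfolding SFTset_def by (auto simp: shift_shift) (auto simp: shift_def)

lemma SFT_closed: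
  assumes fin: "finite \<Omega>"
    and H: "\<forall>n::nat. \<exists>w\<in>SFTset B \<Omega> P. \<forall>i. \<bar>i\<bar> \<le> int n \<longrightarrow> w i = y i"
  shows "y \<in> SFTset B \<Omega> P"
  unfolding SFTset_def
proof (intro CollectI conjI allI subsetI)
  fix b assume "b \<in> range y"
  then obtain i where i: "b = y i" by auto
  obtain w where w: "w \<in> SFTset B \<Omega> P" "\<forall>j. \<bar>j\<bar> \<le> int (nat \<bar>i\<bar>) \<longrightarrow> w j = y j"
    using H by blast
  have "w i = y i" using w(2) by auto
  moreover have "w i \<in> B" using w(1) unfolding SFTset_def by auto
  ultimately show "b \<in> B" using i by simp
next
  fix g
  define n where "n = nat (\<Sum>h\<in>\<Omega>. \<bar>h - g\<bar>)"
  obtain w where w: "w \<in> SFTset B \<Omega> P" "\<forall>j. \<bar>j\<bar> \<le> int n \<longrightarrow> w j = y j"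
    using H by blast
  have "restrict (shift g w) \<Omega> = restrict (shift g y) \<Omega>"
  proof (rule ext)
    fix h show "restrict (shift g w) \<Omega> h = restrict (shift g y) \<Omega> h"
    proof (cases "h \<in> \<Omega>")
      case True
      have "\<bar>h - g\<bar> \<le> (\<Sum>h\<in>\<Omega>. \<bar>h - g\<bar>)" using fin True by (intro member_le_sum) auto
      moreover have "0 \<le> (\<Sum>h\<in>\<Omega>. \<bar>h - g\<bar>)" by (intro sum_nonneg) auto
      ultimately have "\<bar>h - g\<bar> \<le> int n" unfolding n_def by simp
      then show ?thesis using True w(2) by (simp add: shift_def)
    qed simp
  qed
  moreover have "restrict (shift g w) \<Omega> \<in> P" using w(1) unfolding SFTset_def by blast
  ultimately show "restrict (shift g y) \<Omega> \<in> P" by simp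
qed

lemma konig:
  fixes S :: "nat \<Rightarrow> int \<Rightarrow> 'b"
  assumes finB: "finite B" and rng: "\<And>m. range (S m) \<subseteq> B"
  shows "\<exists>y. \<forall>k::nat. \<exists>m\<ge>k. \<forall>i. \<bar>i\<bar> \<le> int k \<longrightarrow> S m i = y i"
proof -
  define agree where "agree k A \<longleftrightarrow> (\<forall>m\<in>A. \<forall>m'\<in>A. \<forall>i. \<bar>i\<bar> \<le> int k \<longrightarrow> S m i = S m' i)"
    for k :: nat and A :: "nat set"
  have step: "\<exists>A'. A' \<subseteq> A \<and> infinite A' \<and> agree k A'" if A: "infinite A" for A k
  proof -
    define f where "f m = restrict (S m) {-int k..int k}" for m
    have "f ` A \<subseteq> {-int k..int k} \<rightarrow>\<^sub>E B" unfolding f_def using rng by (auto simp: image_subset_iff)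
    moreover have "finite ({-int k..int k} \<rightarrow>\<^sub>E B)" using finB by (intro finite_PiE) auto
    ultimately have "finite (f ` A)" by (rule finite_subset)
    from pigeonhole_infinite[OF A this] obtain a0 where a0: "a0 \<in> A" "infinite {a\<in>A. f a = f a0}"
      ..
    have "agree k {a\<in>A. f a = f a0}"
      unfolding agree_def
    proof (intro ballI allI impI)
      fix m m' i assume m: "m \<in> {a\<in>A. f a = f a0}" and m': "m' \<in> {a\<in>A. f a = f a0}"
        and i: "\<bar>i\<bar> \<le> int k"
      have "f m i = f m' i" using m m' by simp
      then show "S m i = S m' i" using i unfolding f_def by (simp add: abs_le_iff)
    qed
    moreover have "{a\<in>A. f a = f a0} \<subseteq> A" by blast
    ultimately show ?thesis using a0(2) by (intro exI[of _ "{a\<in>A. f a = f a0}"]) simp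
  qed
  define F where "F = rec_nat UNIV (\<lambda>k A. SOME A'. A' \<subseteq> A \<and> infinite A' \<and> agree k A')"
  have F0: "F 0 = UNIV" unfolding F_def by simp
  have FS: "F (Suc k) = (SOME A'. A' \<subseteq> F k \<and> infinite A' \<and> agree k A')" for k
    unfolding F_def by simp
  have inf: "infinite (F k)" for k
  proof (induction k)
    case 0 then show ?case using F0 by simp
  next
    case (Suc k)
    have "(SOME A'. A' \<subseteq> F k \<and> infinite A' \<and> agree k A') \<subseteq> F k \<and>
          infinite (SOME A'. A' \<subseteq> F k \<and> infinite A' \<and> agree k A') \<and> agree k (SOME A'. A' \<subseteq> F k \<and> infinite A' \<and> agree k A')"
      by (rule someI_ex[OF step[OF Suc]])
    then show ?case unfolding FS by (elim conjE)
  qed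
  have props: "F (Suc k) \<subseteq> F k \<and> agree k (F (Suc k))" for k
  proof -
    have "(SOME A'. A' \<subseteq> F k \<and> infinite A' \<and> agree k A') \<subseteq> F k \<and>
          infinite (SOME A'. A' \<subseteq> F k \<and> infinite A' \<and> agree k A') \<and> agree k (SOME A'. A' \<subseteq> F k \<and> infinite A' \<and> agree k A')"
      by (rule someI_ex[OF step[OF inf[of k]]])
    then show ?thesis unfolding FS by simp
  qed
  have anti: "k \<le> k' \<Longrightarrow> F k' \<subseteq> F k" for k k'
  proof (induction k' rule: dec_induct)
    case base then show ?case by simp
  next
    case (step n) then show ?case using props[of n] by blast
  qed
  define y where "y i = S (SOME m. m \<in> F (Suc (nat \<bar>i\<bar>))) i" for i
  have main: "\<exists>m\<ge>k. \<forall>i. \<bar>i\<bar> \<le> int k \<longrightarrow> S m i = y i" for k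
  proof -
    obtain m where m: "m \<in> F (Suc k)" "m \<ge> k"
      using inf[of "Suc k"] infinite_nat_iff_unbounded_le by blast
    have "S m i = y i" if i: "\<bar>i\<bar> \<le> int k" for i
    proof -
      define K where "K = Suc (nat \<bar>i\<bar>)"
      have "K \<le> Suc k" unfolding K_def using i by linarith
      then have m1: "m \<in> F K" using anti[of K "Suc k"] m(1) by blast
      have ne: "F K \<noteq> {}" using inf[of K] by auto
      have m2: "(SOME m. m \<in> F K) \<in> F K" using ne some_in_eq by blast
      have ag: "agree (nat \<bar>i\<bar>) (F K)" using props[of "nat \<bar>i\<bar>"] unfolding K_def by simp
      have "\<bar>i\<bar> \<le> int (nat \<bar>i\<bar>)" by simp
      then have "S m i = S (SOME m. m \<in> F K) i" using ag m1 m2 unfolding agree_def by blast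
      then show ?thesis unfolding y_def K_def by simp
    qed
    then show ?thesis using m(2) by blast
  qed
  show ?thesis by (rule exI[of _ y]) (use main in blast)
qed

lemma unif:
  fixes \<phi> :: "(int \<Rightarrow> nat) \<Rightarrow> (int \<Rightarrow> 'a)"
  assumes finB: "finite B" and fin: "finite \<Omega>" and cont: "continuous_conf_on (SFTset B \<Omega> P) \<phi>"
  shows "\<exists>m::nat. \<forall>y\<in>SFTset B \<Omega> P. \<forall>z\<in>SFTset B \<Omega> P.
            (\<forall>i. \<bar>i\<bar> \<le> int m \<longrightarrow> y i = z i) \<longrightarrow> \<phi> y 0 = \<phi> z 0"
proof (rule ccontr)
  let ?Y = "SFTset B \<Omega> P"
  assume nt: "\<not> ?thesis"
  have ex: "\<exists>y. \<exists>z. y \<in> ?Y \<and> z \<in> ?Y \<and> (\<forall>i. \<bar>i\<bar> \<le> int m \<longrightarrow> y i = z i) \<and> \<phi> y 0 \<noteq> \<phi> z 0" for m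
  proof (rule ccontr)
    assume a: "\<not> (\<exists>y. \<exists>z. y \<in> ?Y \<and> z \<in> ?Y \<and> (\<forall>i. \<bar>i\<bar> \<le> int m \<longrightarrow> y i = z i) \<and> \<phi> y 0 \<noteq> \<phi> z 0)"
    have "\<forall>y\<in>?Y. \<forall>z\<in>?Y. (\<forall>i. \<bar>i\<bar> \<le> int m \<longrightarrow> y i = z i) \<longrightarrow> \<phi> y 0 = \<phi> z 0"
    proof (intro ballI impI)
      fix y z assume "y \<in> ?Y" "z \<in> ?Y" "\<forall>i. \<bar>i\<bar> \<le> int m \<longrightarrow> y i = z i"
      then show "\<phi> y 0 = \<phi> z 0" using a by blast
    qed
    then have "\<exists>m::nat. \<forall>y\<in>?Y. \<forall>z\<in>?Y. (\<forall>i. \<bar>i\<bar> \<le> int m \<longrightarrow> y i = z i) \<longrightarrow> \<phi> y 0 = \<phi> z 0"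
      by (rule exI)
    then show False using nt by simp
  qed
  from choice[OF allI[OF ex]] obtain ys where ys:
    "\<forall>m. \<exists>z. ys m \<in> ?Y \<and> z \<in> ?Y \<and> (\<forall>i. \<bar>i\<bar> \<le> int m \<longrightarrow> ys m i = z i) \<and> \<phi> (ys m) 0 \<noteq> \<phi> z 0" ..
  from choice[OF ys] obtain zs where zs:
    "\<forall>m. ys m \<in> ?Y \<and> zs m \<in> ?Y \<and> (\<forall>i. \<bar>i\<bar> \<le> int m \<longrightarrow> ys m i = zs m i) \<and> \<phi> (ys m) 0 \<noteq> \<phi> (zs m) 0" ..
  have yz1: "ys m \<in> ?Y" for m using zs by simp
  have yz2: "zs m \<in> ?Y" for m using zs by simp
  have yz3: "\<forall>i. \<bar>i\<bar> \<le> int m \<longrightarrow> ys m i = zs m i" for m using zs by simp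
  have yz4: "\<phi> (ys m) 0 \<noteq> \<phi> (zs m) 0" for m using zs by simp
  have rng: "\<And>m. range (ys m) \<subseteq> B" using yz1 unfolding SFTset_def by auto
  from konig[OF finB rng] obtain y0 where y0: "\<forall>k::nat. \<exists>m\<ge>k. \<forall>i. \<bar>i\<bar> \<le> int k \<longrightarrow> ys m i = y0 i"
    ..
  have y0Y: "y0 \<in> ?Y"
  proof (rule SFT_closed[OF fin], intro allI)
    fix n :: nat
    obtain m where "m \<ge> n" "\<forall>i. \<bar>i\<bar> \<le> int n \<longrightarrow> ys m i = y0 i" using y0 by blast
    then show "\<exists>w\<in>?Y. \<forall>i. \<bar>i\<bar> \<le> int n \<longrightarrow> w i = y0 i" using yz1 by blast
  qed
  from cont[unfolded continuous_conf_on_def, rule_format, OF y0Y, of 0] obtain m0 where m0: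
    "\<forall>w\<in>?Y. (\<forall>i. \<bar>i\<bar> \<le> int m0 \<longrightarrow> w i = y0 i) \<longrightarrow> (\<forall>i. \<bar>i\<bar> \<le> int 0 \<longrightarrow> \<phi> w i = \<phi> y0 i)"
    ..
  obtain m where m: "m \<ge> m0" "\<forall>i. \<bar>i\<bar> \<le> int m0 \<longrightarrow> ys m i = y0 i" using y0 by blast
  have "\<forall>i. \<bar>i\<bar> \<le> int m0 \<longrightarrow> zs m i = y0 i"
  proof (intro allI impI)
    fix i :: int assume i: "\<bar>i\<bar> \<le> int m0"
    then have "\<bar>i\<bar> \<le> int m" using m(1) by linarith
    then show "zs m i = y0 i" using yz3[of m] m(2) i by metis
  qed
  then have "\<phi> (zs m) 0 = \<phi> y0 0" using m0 yz2[of m] by auto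
  moreover have "\<phi> (ys m) 0 = \<phi> y0 0" using m0 yz1[of m] m(2) by auto
  ultimately show False using yz4[of m] by simp
qed

definition G :: "nat set \<Rightarrow> int set \<Rightarrow> (int \<Rightarrow> nat) set \<Rightarrow> nat \<Rightarrow> (int \<Rightarrow> nat) set \<Rightarrow> (int \<Rightarrow> bool) set" where
  "G B \<Omega> P m T = (\<lambda>y i. restrict (shift (-i) y) {-int m..int m} \<in> T) ` SFTset B \<Omega> P"

lemma sofic_rep:
  fixes X :: "(int \<Rightarrow> bool) set"
  assumes "sofic X"
  shows "\<exists>B \<Omega> P m T. finite B \<and> finite \<Omega> \<and> P \<subseteq> \<Omega> \<rightarrow>\<^sub>E B \<and> T \<subseteq> {-int m..int m} \<rightarrow>\<^sub>E B \<and> X = G B \<Omega> P m T"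
proof -
  obtain B Y and \<phi> :: "(int \<Rightarrow> nat) \<Rightarrow> (int \<Rightarrow> bool)" where
    H: "SFT_over B Y" "continuous_conf_on Y \<phi>" "equivariant_on Y \<phi>" "\<phi> ` Y = X"
    using assms unfolding sofic_def by blast
  obtain \<Omega> P where OP: "finite B" "finite \<Omega>" "P \<subseteq> \<Omega> \<rightarrow>\<^sub>E B" "Y = SFTset B \<Omega> P"
    using H(1) unfolding SFT_over_def SFTset_def by blast
  obtain m :: nat where m: "\<forall>y\<in>Y. \<forall>z\<in>Y. (\<forall>i. \<bar>i\<bar> \<le> int m \<longrightarrow> y i = z i) \<longrightarrow> \<phi> y 0 = \<phi> z 0"
    using unif[OF OP(1,2)] H(2) OP(4) by blast
  define T where "T = {p \<in> {-int m..int m} \<rightarrow>\<^sub>E B. \<exists>y\<in>Y. restrict y {-int m..int m} = p \<and> \<phi> y 0}"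
  have T: "T \<subseteq> {-int m..int m} \<rightarrow>\<^sub>E B" unfolding T_def by auto
  have eq: "\<phi> y = (\<lambda>i. restrict (shift (-i) y) {-int m..int m} \<in> T)" if y: "y \<in> Y" for y
  proof (rule ext)
    fix i
    have sY: "shift (-i) y \<in> Y" using y OP(4) SFT_shift by metis
    have "\<phi> (shift (-i) y) = shift (-i) (\<phi> y)" using H(3) y unfolding equivariant_on_def by blast
    then have e1: "\<phi> y i = \<phi> (shift (-i) y) 0" by (simp add: shift_def)
    have "\<phi> (shift (-i) y) 0 \<longleftrightarrow> restrict (shift (-i) y) {-int m..int m} \<in> T"
    proof
      assume "\<phi> (shift (-i) y) 0"
      moreover have "restrict (shift (-i) y) {-int m..int m} \<in> {-int m..int m} \<rightarrow>\<^sub>E B"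
        using sY OP(4) unfolding SFTset_def by auto
      ultimately show "restrict (shift (-i) y) {-int m..int m} \<in> T" unfolding T_def using sY by blast
    next
      assume "restrict (shift (-i) y) {-int m..int m} \<in> T"
      then obtain y' where y': "y' \<in> Y" "restrict y' {-int m..int m} = restrict (shift (-i) y) {-int m..int m}" "\<phi> y' 0"
        unfolding T_def by auto
      have "\<forall>j. \<bar>j\<bar> \<le> int m \<longrightarrow> y' j = shift (-i) y j"
      proof (intro allI impI)
        fix j assume "\<bar>j\<bar> \<le> int m"
        then have "j \<in> {-int m..int m}" by auto
        then show "y' j = shift (-i) y j" using fun_cong[OF y'(2), of j] by simp
      qed
      then show "\<phi> (shift (-i) y) 0" using m y'(1,3) sY by metis
    qed
    then show "\<phi> y i = (restrict (shift (-i) y) {-int m..int m} \<in> T)" using e1 by simp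
  qed
  have "X = G B \<Omega> P m T" unfolding G_def using H(4) OP(4) eq by (auto simp: image_def)
  then show ?thesis using OP T by blast
qed

lemma countable_sofic: "countable {X :: (int \<Rightarrow> bool) set. sofic X}"
proof -
  define Dom where "Dom = (\<Union>B\<in>{B::nat set. finite B}. \<Union>\<Omega>\<in>{\<Omega>::int set. finite \<Omega>}. \<Union>m\<in>(UNIV::nat set).
     {B} \<times> {\<Omega>} \<times> Pow (\<Omega> \<rightarrow>\<^sub>E B) \<times> {m} \<times> Pow ({-int m..int m} \<rightarrow>\<^sub>E B))"
  have cD: "countable Dom" unfolding Dom_def
  proof (intro countable_UN[OF countable_Collect_finite] countable_UN[OF countable_Collect_finite]
      countable_UN[OF countableI_type] countable_finite)
    fix B :: "nat set" and \<Omega> :: "int set" and m :: nat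
    assume "B \<in> {B. finite B}" "\<Omega> \<in> {\<Omega>. finite \<Omega>}"
    then show "finite ({B} \<times> {\<Omega>} \<times> Pow (\<Omega> \<rightarrow>\<^sub>E B) \<times> {m} \<times> Pow ({-int m..int m} \<rightarrow>\<^sub>E B))"
      by (auto intro!: finite_cartesian_product finite_PiE simp: finite_Pow_iff)
  qed
  have sub: "{X :: (int \<Rightarrow> bool) set. sofic X} \<subseteq> (\<lambda>(B, \<Omega>, P, m, T). G B \<Omega> P m T) ` Dom"
  proof
    fix X :: "(int \<Rightarrow> bool) set" assume "X \<in> {X. sofic X}"
    then have "sofic X" by simp
    from sofic_rep[OF this] obtain B \<Omega> P m T where h: "finite B" "finite \<Omega>" "P \<subseteq> \<Omega> \<rightarrow>\<^sub>E B" "T \<subseteq> {-int m..int m} \<rightarrow>\<^sub>E B" "X = G B \<Omega> P m T"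
      by blast
    have "(B, \<Omega>, P, m, T) \<in> {B} \<times> {\<Omega>} \<times> Pow (\<Omega> \<rightarrow>\<^sub>E B) \<times> {m} \<times> Pow ({-int m..int m} \<rightarrow>\<^sub>E B)"
      by (intro SigmaI singletonI PowI h(3) h(4))
    then have mem: "(B, \<Omega>, P, m, T) \<in> Dom" unfolding Dom_def
      by (intro UN_I[of B] UN_I[of \<Omega>] UN_I[of m]) (use h(1,2) in simp_all)
    have "X = (\<lambda>(B, \<Omega>, P, m, T). G B \<Omega> P m T) (B, \<Omega>, P, m, T)" using h(5) by simp
    then show "X \<in> (\<lambda>(B, \<Omega>, P, m, T). G B \<Omega> P m T) ` Dom"
      using mem by (rule image_eqI)
  qed
  show ?thesis by (rule countable_subset[OF sub countable_image[OF cD]])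
qed


theorem proposition4p8:
  shows "uncountable {X :: (int \<Rightarrow> bool) set.
           W_subshift X \<and> \<not> sofic X \<and> \<not> strongly_irreducible X}"
proof
  assume c: "countable {X :: (int \<Rightarrow> bool) set.
           W_subshift X \<and> \<not> sofic X \<and> \<not> strongly_irreducible X}"
  have sub: "range gapX \<subseteq> {X :: (int \<Rightarrow> bool) set.
           W_subshift X \<and> \<not> sofic X \<and> \<not> strongly_irreducible X} \<union> {X. sofic X}"
    using gapX_W gapX_not_SI by auto
  have "countable (range gapX)"
    by (rule countable_subset[OF sub countable_Un[OF c countable_sofic]])
  then have "countable (UNIV :: nat set set)" by (rule countable_image_inj_on[OF _ gapX_inj])
  with uncountable_natset show False by simp
qed

end
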